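(* For every integer $n\ge1$, $$|\mathbb H_n^\circ|=n^4-(n-1)^4,\qquad |\mathbb H_n^{i,j}|=\frac{4!}{i!\,j!\,(4-i-j)!}(n-1)^{4-i-j}\quad\text{for all integers } 0<i,j \text{ with } i+j\le4 .$$
   Context: Let $\mathbb Z^4_H=\{\mathbf k\in\mathbb Z^4: k_1+k_2+k_3+k_4=0\}$ and $\mathbb H=\{\mathbf k\in\mathbb Z^4_H: k_1\equiv k_2\equiv k_3\equiv k_4\pmod 4\}$. Let $\mathbb H_n^\circ=\{\mathbf k\in\mathbb H: |k_i-k_l|<4n \text{ for all } i,l\}$. For $0<i,j$ with $i+j\le4$, let $\mathbb H_n^{i,j}$ be the set of $\mathbf k\in\mathbb H$ with $\max_lk_l-\min_lk_l=4n$ such that exactly $i$ coordinates of $\mathbf k$ equal $\max_lk_l$ and exactly $j$ coordinates equal $\min_lk_l$ (equivalently, $\mathbf k/(4n)$ lies on the boundary part $B^{i,j}$ of the rhombic dodecahedron $\{\mathbf t: t_1+\dots+t_4=0,\ |t_i-t_l|\le 1\}$ where exactly $i$ coordinates attain the maximum and $j$ the minimum, the two differing by $1$). *)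

theory Defs
  imports "HOL-Analysis.Analysis"
begin

definition ZH :: "(int^4) set" where
  "ZH = {k. (\<Sum>i\<in>UNIV. k $ i) = 0}"

definition HH :: "(int^4) set" where
  "HH = {k \<in> ZH. \<forall>i l. k $ i mod 4 = k $ l mod 4}"

definition Hcirc :: "nat \<Rightarrow> (int^4) set" where
  "Hcirc n = {k \<in> HH. \<forall>i l. \<bar>k $ i - k $ l\<bar> < 4 * int n}"

definition maxc :: "int^4 \<Rightarrow> int" where
  "maxc k = Max (range (\<lambda>l. k $ l))"

definition minc :: "int^4 \<Rightarrow> int" where
  "minc k = Min (range (\<lambda>l. k $ l))"

definition Hij :: "nat \<Rightarrow> nat \<Rightarrow> nat \<Rightarrow> (int^4) set" where
  "Hij n i j = {k \<in> HH. maxc k - minc k = 4 * int n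
      \<and> card {l. k $ l = maxc k} = i \<and> card {l. k $ l = minc k} = j}"

end

theory Submission
  imports Defs "HOL-Library.FuncSet"
begin

lemma vcard:
  fixes A :: "'n::finite \<Rightarrow> 'a set"
  shows "card {x::'a^'n. \<forall>i. x$i \<in> A i} = (\<Prod>i\<in>UNIV. card (A i))"
proof -
  have "bij_betw vec_nth {x::'a^'n. \<forall>i. x$i \<in> A i} (PiE UNIV A)"
  proof (rule bij_betw_byWitness[where f'=vec_lambda])
    show "\<forall>a\<in>{x::'a^'n. \<forall>i. x$i \<in> A i}. vec_lambda (vec_nth a) = a" by simp
    show "\<forall>a'\<in>PiE UNIV A. vec_nth (vec_lambda a') = a'" by (auto simp: fun_eq_iff)
    show "vec_nth ` {x::'a^'n. \<forall>i. x$i \<in> A i} \<subseteq> PiE UNIV A" by auto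
    show "vec_lambda ` PiE UNIV A \<subseteq> {x::'a^'n. \<forall>i. x$i \<in> A i}" by auto
  qed
  then have "card {x::'a^'n. \<forall>i. x$i \<in> A i} = card (PiE UNIV A)" by (rule bij_betw_same_card)
  also have "\<dots> = (\<Prod>i\<in>UNIV. card (A i))" by (simp add: card_PiE)
  finally show ?thesis .
qed

lemma vfinite:
  fixes A :: "'n::finite \<Rightarrow> 'a set"
  assumes "\<And>i. finite (A i)"
  shows "finite {x::'a^'n. \<forall>i. x$i \<in> A i}"
proof -
  have "{x::'a^'n. \<forall>i. x$i \<in> A i} \<subseteq> vec_lambda ` PiE UNIV A"
  proof
    fix x :: "'a^'n" assume "x \<in> {x::'a^'n. \<forall>i. x$i \<in> A i}"
    then have "vec_nth x \<in> PiE UNIV A" by auto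
    then show "x \<in> vec_lambda ` PiE UNIV A" by (metis image_eqI vec_nth_inverse)
  qed
  moreover have "finite (vec_lambda ` PiE UNIV A)" using assms by (simp add: finite_PiE)
  ultimately show ?thesis by (rule finite_subset)
qed

definition gg :: "int^4 \<Rightarrow> int^4" where "gg k = (\<chi> l. (k$l - minc k) div 4)"
definition hh :: "int^4 \<Rightarrow> int^4" where "hh m = (\<chi> l. 4 * m$l - (\<Sum>i\<in>UNIV. m$i))"

lemma minc_le: "minc k \<le> k$l" unfolding minc_def by (rule Min_le) auto
lemma maxc_ge: "k$l \<le> maxc k" unfolding maxc_def by (rule Max_ge) auto
lemma minc_in: "\<exists>l. k$l = minc k" unfolding minc_def
  using Min_in[of "range (\<lambda>l. k$l)"] by (metis UNIV_not_empty empty_is_image finite finite_imageI imageE)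
lemma maxc_in: "\<exists>l. k$l = maxc k" unfolding maxc_def
  using Max_in[of "range (\<lambda>l. k$l)"] by (metis UNIV_not_empty empty_is_image finite finite_imageI imageE)
lemma minc_eqI: "(\<And>l. c \<le> k$l) \<Longrightarrow> k$l0 = c \<Longrightarrow> minc k = c"
  unfolding minc_def by (rule Min_eqI) auto
lemma maxc_eqI: "(\<And>l. k$l \<le> c) \<Longrightarrow> k$l0 = c \<Longrightarrow> maxc k = c"
  unfolding maxc_def by (rule Max_eqI) auto

lemma sum4: "(\<Sum>i\<in>(UNIV::4 set). c) = 4 * (c::int)" by simp

lemma HH_dvd: assumes "k \<in> HH" shows "4 dvd (k$l - k$l')"
  using assms unfolding HH_def by (auto simp: mod_eq_dvd_iff)

lemma gg_eq: assumes "k \<in> HH" shows "k$l - minc k = 4 * (gg k $ l)"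
proof -
  obtain l0 where "k$l0 = minc k" using minc_in by blast
  then have "4 dvd (k$l - minc k)" using HH_dvd[OF assms] by metis
  then show ?thesis unfolding gg_def by simp
qed

lemma hg: assumes "k \<in> HH" shows "hh (gg k) = k"
proof -
  have s0: "(\<Sum>i\<in>UNIV. k$i) = 0" using assms unfolding HH_def ZH_def by auto
  have "4 * (\<Sum>i\<in>UNIV. gg k $ i) = (\<Sum>i\<in>UNIV. k$i - minc k)"
    by (simp add: sum_distrib_left gg_eq[OF assms])
  also have "\<dots> = - 4 * minc k" by (simp add: sum_subtractf s0)
  finally have "(\<Sum>i\<in>UNIV. gg k $ i) = - minc k" by simp
  then show ?thesis unfolding hh_def using gg_eq[OF assms]
    by (simp add: vec_eq_iff) (metis add.commute diff_add_cancel)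
qed

lemma hh_HH: "hh m \<in> HH"
proof -
  have "(\<Sum>i\<in>UNIV. hh m $ i) = 0"
    by (simp add: hh_def sum_subtractf sum_distrib_left[symmetric])
  moreover have "\<forall>i l. hh m $ i mod 4 = hh m $ l mod 4"
    by (auto simp: hh_def mod_eq_dvd_iff)
  ultimately show ?thesis unfolding HH_def ZH_def by auto
qed

lemma minc_hh: assumes "\<forall>l. 0 \<le> m$l" "m$l0 = 0" shows "minc (hh m) = - (\<Sum>i\<in>UNIV. m$i)"
  by (rule minc_eqI[where ?l0.0=l0]) (use assms in \<open>auto simp: hh_def\<close>)

lemma maxc_hh: assumes "\<forall>l. m$l \<le> c" "m$l0 = c" shows "maxc (hh m) = 4*c - (\<Sum>i\<in>UNIV. m$i)"
  by (rule maxc_eqI[where ?l0.0=l0]) (use assms in \<open>auto simp: hh_def\<close>)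

lemma gh: assumes "\<forall>l. 0 \<le> m$l" "m$l0 = 0" shows "gg (hh m) = m"
  using minc_hh[OF assms] by (simp add: gg_def hh_def vec_eq_iff)

lemma Hcirc_bij: assumes "n \<ge> 1"
  shows "bij_betw gg (Hcirc n) ({m::int^4. \<forall>l. m$l \<in> {0..int n - 1}} - {m::int^4. \<forall>l. m$l \<in> {1..int n - 1}})"
proof (rule bij_betw_byWitness[where f'=hh])
  show "\<forall>a\<in>Hcirc n. hh (gg a) = a" using hg unfolding Hcirc_def by auto
  show "\<forall>a'\<in>{m::int^4. \<forall>l. m$l \<in> {0..int n - 1}} - {m::int^4. \<forall>l. m$l \<in> {1..int n - 1}}. gg (hh a') = a'"
  proof
    fix m assume "m \<in> {m::int^4. \<forall>l. m$l \<in> {0..int n - 1}} - {m::int^4. \<forall>l. m$l \<in> {1..int n - 1}}"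
    then have A: "\<forall>l. 0 \<le> m$l" "\<forall>l. m$l \<le> int n - 1" "\<not> (\<forall>l. m$l \<in> {1..int n - 1})" by auto
    have "\<exists>l0. m$l0 = 0"
    proof (rule ccontr)
      assume "\<not> (\<exists>l0. m$l0 = 0)"
      then have "\<forall>l. m$l \<in> {1..int n - 1}" using A(1,2) by (metis atLeastAtMost_iff int_one_le_iff_zero_less order_le_less)
      then show False using A(3) by blast
    qed
    then have "\<forall>l. 0 \<le> m$l" "\<exists>l0. m$l0 = 0" using A by auto
    then obtain l0 where "m$l0 = 0" "\<forall>l. 0 \<le> m$l" by blast
    then show "gg (hh m) = m" using gh by blast
  qed
  show "gg ` Hcirc n \<subseteq> {m::int^4. \<forall>l. m$l \<in> {0..int n - 1}} - {m::int^4. \<forall>l. m$l \<in> {1..int n - 1}}"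
  proof
    fix m assume "m \<in> gg ` Hcirc n"
    then obtain k where k: "k \<in> Hcirc n" "m = gg k" by blast
    then have kH: "k \<in> HH" and kd: "\<forall>i l. \<bar>k $ i - k $ l\<bar> < 4 * int n" unfolding Hcirc_def by auto
    obtain l0 where l0: "k$l0 = minc k" using minc_in by blast
    have e: "\<And>l. k$l - minc k = 4 * m$l" using gg_eq[OF kH] k by simp
    have "\<And>l. m$l \<in> {0..int n - 1}"
    proof -
      fix l
      have "0 \<le> k$l - minc k" using minc_le by simp
      moreover have "k$l - minc k < 4 * int n" using kd l0 by (metis abs_less_iff)
      ultimately show "m$l \<in> {0..int n - 1}" using e[of l] by auto
    qed
    moreover have "m$l0 = 0" using e[of l0] l0 by simp
    ultimately have a: "\<forall>l. m$l \<in> {0..int n - 1}" "m$l0 = 0" by blast+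
    show "m \<in> {m::int^4. \<forall>l. m$l \<in> {0..int n - 1}} - {m::int^4. \<forall>l. m$l \<in> {1..int n - 1}}"
    proof -
      have "m \<notin> {m::int^4. \<forall>l. m$l \<in> {1..int n - 1}}"
      proof
        assume "m \<in> {m::int^4. \<forall>l. m$l \<in> {1..int n - 1}}"
        then have "m$l0 \<in> {1..int n - 1}" by blast
        then show False using a(2) by simp
      qed
      then show ?thesis using a(1) by blast
    qed
  qed
  show "hh ` ({m::int^4. \<forall>l. m$l \<in> {0..int n - 1}} - {m::int^4. \<forall>l. m$l \<in> {1..int n - 1}}) \<subseteq> Hcirc n"
  proof
    fix k assume "k \<in> hh ` ({m::int^4. \<forall>l. m$l \<in> {0..int n - 1}} - {m::int^4. \<forall>l. m$l \<in> {1..int n - 1}})"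
    then obtain m where m: "\<forall>l. m$l \<in> {0..int n - 1}" "k = hh m" by blast
    have "\<bar>k $ i - k $ l\<bar> < 4 * int n" for i l
    proof -
      have "k$i - k$l = 4 * (m$i - m$l)" using m(2) by (simp add: hh_def algebra_simps)
      moreover have "\<bar>m$i - m$l\<bar> < int n" using m(1)[rule_format, of i] m(1)[rule_format, of l] by auto
      ultimately show ?thesis by simp
    qed
    then show "k \<in> Hcirc n" unfolding Hcirc_def using hh_HH m(2) by auto
  qed
qed

lemma card_Hcirc: assumes "n \<ge> 1" shows "card (Hcirc n) = n ^ 4 - (n - 1) ^ 4"
proof -
  have "card (Hcirc n) = card ({m::int^4. \<forall>l. m$l \<in> {0..int n - 1}} - {m::int^4. \<forall>l. m$l \<in> {1..int n - 1}})"
    using bij_betw_same_card[OF Hcirc_bij[OF assms]] .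
  also have "\<dots> = card {m::int^4. \<forall>l. m$l \<in> {0..int n - 1}} - card {m::int^4. \<forall>l. m$l \<in> {1..int n - 1}}"
  proof (rule card_Diff_subset)
    show "finite {m::int^4. \<forall>l. m$l \<in> {1..int n - 1}}" by (rule vfinite) simp
    show "{m::int^4. \<forall>l. m$l \<in> {1..int n - 1}} \<subseteq> {m::int^4. \<forall>l. m$l \<in> {0..int n - 1}}"
    proof (intro subsetI CollectI allI)
      fix m :: "int^4" and l assume "m \<in> {m::int^4. \<forall>l. m$l \<in> {1..int n - 1}}"
      then have "m$l \<in> {1..int n - 1}" by blast
      then show "m$l \<in> {0..int n - 1}" by simp
    qed
  qed
  also have "\<dots> = n ^ 4 - (n - 1) ^ 4"
    unfolding vcard using assms by (simp add: nat_diff_distrib)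
  finally show ?thesis .
qed

definition M2 :: "nat \<Rightarrow> nat \<Rightarrow> nat \<Rightarrow> (int^4) set" where
  "M2 n i j = {m::int^4. (\<forall>l. m$l \<in> {0..int n}) \<and> card {l. m$l = int n} = i \<and> card {l. m$l = 0} = j}"

lemma Hij_bij: assumes "n \<ge> 1" "i > 0" "j > 0"
  shows "bij_betw gg (Hij n i j) (M2 n i j)"
proof (rule bij_betw_byWitness[where f'=hh])
  show "\<forall>a\<in>Hij n i j. hh (gg a) = a" using hg unfolding Hij_def by auto
  show "\<forall>a'\<in>M2 n i j. gg (hh a') = a'"
  proof
    fix m assume m: "m \<in> M2 n i j"
    then have "{l. m$l = 0} \<noteq> {}" using assms unfolding M2_def by (auto simp: card_gt_0_iff)
    then obtain l0 where "m$l0 = 0" by blast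
    moreover have "\<forall>l. 0 \<le> m$l" using m unfolding M2_def by auto
    ultimately show "gg (hh m) = m" using gh by blast
  qed
  show "gg ` Hij n i j \<subseteq> M2 n i j"
  proof
    fix m assume "m \<in> gg ` Hij n i j"
    then obtain k where k: "k \<in> Hij n i j" "m = gg k" by blast
    then have kH: "k \<in> HH" and kd: "maxc k - minc k = 4 * int n"
      and ci: "card {l. k $ l = maxc k} = i" and cj: "card {l. k $ l = minc k} = j"
      unfolding Hij_def by auto
    have e: "\<And>l. k$l - minc k = 4 * m$l" using gg_eq[OF kH] k by simp
    have r: "\<forall>l. m$l \<in> {0..int n}"
    proof
      fix l
      have "0 \<le> k$l - minc k" using minc_le by simp
      moreover have "k$l - minc k \<le> 4 * int n" using kd maxc_ge[of k l] by simp
      ultimately show "m$l \<in> {0..int n}" using e[of l] by auto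
    qed
    have "{l. m$l = int n} = {l. k $ l = maxc k}"
    proof -
      have "m$l = int n \<longleftrightarrow> k $ l = maxc k" for l using e[of l] kd by auto
      then show ?thesis by blast
    qed
    moreover have "{l. m$l = 0} = {l. k $ l = minc k}"
    proof -
      have "m$l = 0 \<longleftrightarrow> k $ l = minc k" for l using e[of l] by auto
      then show ?thesis by blast
    qed
    ultimately show "m \<in> M2 n i j" unfolding M2_def using r ci cj by auto
  qed
  show "hh ` M2 n i j \<subseteq> Hij n i j"
  proof
    fix k assume "k \<in> hh ` M2 n i j"
    then obtain m where m: "m \<in> M2 n i j" "k = hh m" by blast
    have r: "\<forall>l. 0 \<le> m$l" "\<forall>l. m$l \<le> int n" using m unfolding M2_def by auto
    have "{l. m$l = 0} \<noteq> {}" using m assms unfolding M2_def by (auto simp: card_gt_0_iff)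
    then obtain l0 where l0: "m$l0 = 0" by blast
    have "{l. m$l = int n} \<noteq> {}" using m assms unfolding M2_def by (auto simp: card_gt_0_iff)
    then obtain l1 where l1: "m$l1 = int n" by blast
    have mi: "minc k = - (\<Sum>i\<in>UNIV. m$i)" using minc_hh[OF r(1) l0] m(2) by simp
    have ma: "maxc k = 4 * int n - (\<Sum>i\<in>UNIV. m$i)" using maxc_hh[OF r(2) l1] m(2) by simp
    have "{l. k $ l = maxc k} = {l. m$l = int n}" using m(2) ma by (auto simp: hh_def)
    moreover have "{l. k $ l = minc k} = {l. m$l = 0}" using m(2) mi by (auto simp: hh_def)
    ultimately show "k \<in> Hij n i j" unfolding Hij_def using hh_HH m mi ma unfolding M2_def by auto
  qed
qed

lemma card_Compl4: "card (- (A::4 set)) = 4 - card A"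
proof -
  have "card (- A) = card (UNIV::4 set) - card A"
    by (metis Compl_eq_Diff_UNIV card_Diff_subset top_greatest finite)
  then show ?thesis by simp
qed

definition RR :: "nat \<Rightarrow> 4 set \<Rightarrow> 4 set \<Rightarrow> 4 \<Rightarrow> int set" where
  "RR n I J l = (if l \<in> I then {int n} else if l \<in> J then {0} else {1..int n - 1})"

definition SS :: "nat \<Rightarrow> 4 set \<Rightarrow> 4 set \<Rightarrow> (int^4) set" where
  "SS n I J = {m::int^4. \<forall>l. m$l \<in> RR n I J l}"

definition PP :: "nat \<Rightarrow> nat \<Rightarrow> (4 set \<times> 4 set) set" where
  "PP i j = Sigma {I::4 set. card I = i} (\<lambda>I. {J. J \<subseteq> - I \<and> card J = j})"

lemma SS_char: assumes "n \<ge> 1" "I \<inter> J = {}" "m \<in> SS n I J"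
  shows "{l. m$l = int n} = I \<and> {l. m$l = 0} = J \<and> (\<forall>l. m$l \<in> {0..int n})"
proof -
  have h: "\<And>l. m$l \<in> RR n I J l" using assms(3) unfolding SS_def by auto
  have a: "m$l = int n \<longleftrightarrow> l \<in> I" for l
    using h[of l] assms(1,2) by (auto simp: RR_def split: if_splits)
  have b: "m$l = 0 \<longleftrightarrow> l \<in> J" for l
    using h[of l] assms(1,2) by (auto simp: RR_def split: if_splits)
  have c: "m$l \<in> {0..int n}" for l
    using h[of l] assms(1,2) by (auto simp: RR_def split: if_splits)
  show ?thesis using a b c by blast
qed

lemma M2_eq: assumes "n \<ge> 1"
  shows "M2 n i j = (\<Union>p\<in>PP i j. SS n (fst p) (snd p))"
proof
  show "M2 n i j \<subseteq> (\<Union>p\<in>PP i j. SS n (fst p) (snd p))"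
  proof
    fix m assume m: "m \<in> M2 n i j"
    let ?I = "{l. m$l = int n}" and ?J = "{l. m$l = 0}"
    have r: "\<forall>l. m$l \<in> {0..int n}" and ci: "card ?I = i" and cj: "card ?J = j"
      using m unfolding M2_def by auto
    have "(?I, ?J) \<in> PP i j" using ci cj assms unfolding PP_def by auto
    moreover have "m \<in> SS n ?I ?J"
    proof -
      have "m$l \<in> RR n ?I ?J l" for l using r[rule_format, of l] by (auto simp: RR_def)
      then show ?thesis unfolding SS_def by blast
    qed
    ultimately show "m \<in> (\<Union>p\<in>PP i j. SS n (fst p) (snd p))" by force
  qed
  show "(\<Union>p\<in>PP i j. SS n (fst p) (snd p)) \<subseteq> M2 n i j"
  proof
    fix m assume "m \<in> (\<Union>p\<in>PP i j. SS n (fst p) (snd p))"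
    then obtain I J where p: "(I,J) \<in> PP i j" and m: "m \<in> SS n I J" by force
    have d: "I \<inter> J = {}" and ci: "card I = i" and cj: "card J = j" using p unfolding PP_def by auto
    show "m \<in> M2 n i j" using SS_char[OF assms d m] ci cj unfolding M2_def by auto
  qed
qed

lemma card_SS: assumes "n \<ge> 1" "(I,J) \<in> PP i j"
  shows "card (SS n I J) = (n - 1) ^ (4 - i - j)"
proof -
  have d: "I \<inter> J = {}" and ci: "card I = i" and cj: "card J = j" using assms(2) unfolding PP_def by auto
  have cR: "card (RR n I J l) = (if l \<in> I \<union> J then 1 else n - 1)" for l
    using assms(1) by (auto simp: RR_def)
  have "card (SS n I J) = (\<Prod>l\<in>UNIV. card (RR n I J l))" unfolding SS_def by (rule vcard)
  also have "\<dots> = (\<Prod>l\<in>UNIV. if l \<in> I \<union> J then 1 else n - 1)" by (simp add: cR)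
  also have "\<dots> = (\<Prod>l\<in>- (I \<union> J). n - 1)"
  proof -
    have e: "{l. l \<in> I \<or> l \<in> J} = I \<union> J" by blast
    show ?thesis by (simp add: prod.If_cases e)
  qed
  also have "\<dots> = (n - 1) ^ card (- (I \<union> J))" by simp
  also have "card (- (I \<union> J)) = 4 - i - j"
    using d ci cj by (simp only: Compl_Un[symmetric] card_Compl4 card_Un_disjoint finite)
  finally show ?thesis .
qed

lemma card_PP: "card (PP i j) = (4 choose i) * ((4 - i) choose j)"
proof -
  have "card (PP i j) = (\<Sum>I\<in>{I::4 set. card I = i}. card {J. J \<subseteq> - I \<and> card J = j})"
    unfolding PP_def by (rule card_SigmaI) auto
  also have "\<dots> = (\<Sum>I\<in>{I::4 set. card I = i}. (4 - i) choose j)"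
  proof (rule sum.cong)
    fix I :: "4 set" assume "I \<in> {I::4 set. card I = i}"
    then have "card (- I) = 4 - i" by (simp add: card_Compl4)
    then show "card {J. J \<subseteq> - I \<and> card J = j} = (4 - i) choose j"
      using n_subsets[of "- I" j] by simp
  qed simp
  also have "\<dots> = card {I::4 set. card I = i} * ((4 - i) choose j)" by simp
  also have "card {I::4 set. card I = i} = 4 choose i"
    using n_subsets[of "UNIV::4 set" i] by simp
  finally show ?thesis .
qed

lemma card_M2: assumes "n \<ge> 1"
  shows "card (M2 n i j) = (4 choose i) * ((4 - i) choose j) * (n - 1) ^ (4 - i - j)"
proof -
  have "card (M2 n i j) = (\<Sum>p\<in>PP i j. card (SS n (fst p) (snd p)))"
    unfolding M2_eq[OF assms]
  proof (rule card_UN_disjoint)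
    show "finite (PP i j)" by simp
    show "\<forall>p\<in>PP i j. finite (SS n (fst p) (snd p))"
      unfolding SS_def by (intro ballI vfinite) (simp add: RR_def)
    show "\<forall>p\<in>PP i j. \<forall>q\<in>PP i j. p \<noteq> q \<longrightarrow> SS n (fst p) (snd p) \<inter> SS n (fst q) (snd q) = {}"
    proof (intro ballI impI)
      fix p q assume p: "p \<in> PP i j" and q: "q \<in> PP i j" and pq: "p \<noteq> q"
      show "SS n (fst p) (snd p) \<inter> SS n (fst q) (snd q) = {}"
      proof (rule ccontr)
        assume "SS n (fst p) (snd p) \<inter> SS n (fst q) (snd q) \<noteq> {}"
        then obtain m where m1: "m \<in> SS n (fst p) (snd p)" and m2: "m \<in> SS n (fst q) (snd q)" by blast
        have dp: "fst p \<inter> snd p = {}" using p unfolding PP_def by auto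
        have dq: "fst q \<inter> snd q = {}" using q unfolding PP_def by auto
        have "fst p = fst q" "snd p = snd q" using SS_char[OF assms dp m1] SS_char[OF assms dq m2] by auto
        then show False using pq by (simp add: prod_eq_iff)
      qed
    qed
  qed
  also have "\<dots> = (\<Sum>p\<in>PP i j. (n - 1) ^ (4 - i - j))"
    by (rule sum.cong) (auto simp: card_SS[OF assms])
  also have "\<dots> = card (PP i j) * (n - 1) ^ (4 - i - j)" by simp
  finally show ?thesis by (simp add: card_PP)
qed

theorem lemma3p13:
  fixes n :: nat
  assumes "n \<ge> 1"
  shows "card (Hcirc n) = n ^ 4 - (n - 1) ^ 4 \<and>
    (\<forall>i j::nat. 0 < i \<and> 0 < j \<and> i + j \<le> 4 \<longrightarrow>
       real (card (Hij n i j)) =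
         fact 4 / (fact i * fact j * fact (4 - i - j)) * real (n - 1) ^ (4 - i - j))"
proof (intro conjI allI impI)
  show "card (Hcirc n) = n ^ 4 - (n - 1) ^ 4" by (rule card_Hcirc[OF assms])
  fix i j :: nat assume ij: "0 < i \<and> 0 < j \<and> i + j \<le> 4"
  have "card (Hij n i j) = card (M2 n i j)"
    using bij_betw_same_card[OF Hij_bij[OF assms]] ij by blast
  also have "\<dots> = (4 choose i) * ((4 - i) choose j) * (n - 1) ^ (4 - i - j)" by (rule card_M2[OF assms])
  finally have c: "real (card (Hij n i j)) = real ((4 choose i) * ((4 - i) choose j)) * real (n - 1) ^ (4 - i - j)"
    by simp
  have "(i,j) \<in> {(1,1),(1,2),(1,3),(2,1),(2,2),(3,1)}" using ij by auto
  then have "real ((4 choose i) * ((4 - i) choose j)) = fact 4 / (fact i * fact j * fact (4 - i - j))"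
    by (auto simp: fact_numeral eval_nat_numeral binomial_Suc_Suc)
  then show "real (card (Hij n i j)) =
         fact 4 / (fact i * fact j * fact (4 - i - j)) * real (n - 1) ^ (4 - i - j)"
    using c by simp
qed

end
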